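(* Let $G$ be an $n\times n$ grid with $n$ even. Any initial configuration of $k\ge 3$ robots on distinct nodes of $G$ in which exactly one corner of the minimum enclosing square is occupied is gatherable despite at most one crash fault.
   Context: Model. The grid is the anonymous grid graph. A configuration is a map $f:V(G)\to\{0,1,2\}$ ($0$ empty, $1$ singleton, $2$ multiplicity = at least two robots). Robots are anonymous, identical, oblivious, cannot communicate, share no coordinate system, orientation or chirality, and run the same deterministic algorithm, in Look–Compute–Move cycles: snapshot of the whole configuration (global visibility, weak multiplicity detection), deterministic decision to stay or move to an adjacent node, instantaneous move. Fully asynchronous (finite but unbounded adversarial delays; every non-crashed robot activated infinitely often; moves may use outdated snapshots). At most one robot may crash at an adversarial time: it stops forever, stays visible, indistinguishable. Gatherable despite at most one crash fault: some such algorithm guarantees in every execution with at most one crash that after finite time all non-crashed robots are on one node and remain there. Minimum enclosing square (MES): the smallest square subgrid with the same geometric center as the grid containing all occupied nodes; its corners are its four corner nodes. *)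

theory Defs
  imports Main
begin

type_synonym node = "nat \<times> nat"

definition grid :: "nat \<Rightarrow> node set" where
  "grid n = {(x, y). x < n \<and> y < n}"

definition adj :: "node \<Rightarrow> node \<Rightarrow> bool" where
  "adj u v \<longleftrightarrow> \<bar>int (fst u) - int (fst v)\<bar> + \<bar>int (snd u) - int (snd v)\<bar> = 1"

text \<open>Automorphisms of the (anonymous) grid graph: these model the arbitrary local
  coordinate systems (no common origin, orientation or chirality).\<close>
definition grid_aut :: "nat \<Rightarrow> (node \<Rightarrow> node) \<Rightarrow> bool" where
  "grid_aut n \<tau> \<longleftrightarrow> bij_betw \<tau> (grid n) (grid n) \<and>
     (\<forall>u\<in>grid n. \<forall>v\<in>grid n. adj (\<tau> u) (\<tau> v) \<longleftrightarrow> adj u v)"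

text \<open>Values: 0 empty, 1 singleton, 2 multiplicity.\<close>
type_synonym config = "node \<Rightarrow> nat"

definition config_of :: "nat \<Rightarrow> nat \<Rightarrow> (nat \<Rightarrow> node) \<Rightarrow> config" where
  "config_of n k p x = (if x \<in> grid n then min 2 (card {r. r < k \<and> p r = x}) else 0)"

text \<open>The configuration as seen in a local frame \<tau> (\<tau> maps local nodes to global nodes).\<close>
definition view :: "nat \<Rightarrow> (node \<Rightarrow> node) \<Rightarrow> config \<Rightarrow> config" where
  "view n \<tau> c = (\<lambda>x. if x \<in> grid n then c (\<tau> x) else 0)"

text \<open>A deterministic algorithm maps the snapshot and the robot's own position (in its
  local frame) to its destination (in its local frame).\<close>
type_synonym algorithm = "config \<Rightarrow> node \<Rightarrow> node"

definition valid_alg :: "nat \<Rightarrow> algorithm \<Rightarrow> bool" where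
  "valid_alg n A \<longleftrightarrow> (\<forall>c v. v \<in> grid n \<longrightarrow> A c v \<in> grid n \<and> (A c v = v \<or> adj v (A c v)))"

definition target :: "nat \<Rightarrow> algorithm \<Rightarrow> (node \<Rightarrow> node) \<Rightarrow> config \<Rightarrow> node \<Rightarrow> node" where
  "target n A \<tau> c v = \<tau> (A (view n \<tau> c) (inv_into (grid n) \<tau> v))"

text \<open>State: positions of robots and pending (already computed, possibly outdated)
  destinations. One atomic event per step, performed by robot r: a Look(+Compute) if r has
  no pending destination (frame chosen adversarially), otherwise a Move to the pending
  destination.\<close>
type_synonym state = "(nat \<Rightarrow> node) \<times> (nat \<Rightarrow> node option)"

definition robot_step :: "nat \<Rightarrow> nat \<Rightarrow> algorithm \<Rightarrow> nat \<Rightarrow> state \<Rightarrow> state \<Rightarrow> bool" where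
  "robot_step n k A r s s' \<longleftrightarrow>
     (case snd s r of
        None \<Rightarrow> (\<exists>\<tau>. grid_aut n \<tau> \<and>
                  s' = (fst s, (snd s)(r := Some (target n A \<tau> (config_of n k (fst s)) (fst s r)))))
      | Some w \<Rightarrow> s' = ((fst s)(r := w), (snd s)(r := None)))"

definition execution :: "nat \<Rightarrow> nat \<Rightarrow> algorithm \<Rightarrow> (nat \<Rightarrow> node) \<Rightarrow>
    (nat \<Rightarrow> state) \<Rightarrow> (nat \<Rightarrow> nat option) \<Rightarrow> bool" where
  "execution n k A p0 s act \<longleftrightarrow>
     s 0 = (p0, (\<lambda>_. None)) \<and>
     (\<forall>t. case act t of
            None \<Rightarrow> s (Suc t) = s t
          | Some r \<Rightarrow> r < k \<and> robot_step n k A r (s t) (s (Suc t)))"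

definition crash_fair :: "nat \<Rightarrow> (nat \<Rightarrow> nat option) \<Rightarrow> nat set \<Rightarrow> nat \<Rightarrow> bool" where
  "crash_fair k act C tc \<longleftrightarrow>
     C \<subseteq> {..<k} \<and> card C \<le> 1 \<and>
     (\<forall>t\<ge>tc. \<forall>r\<in>C. act t \<noteq> Some r) \<and>
     (\<forall>r<k. r \<notin> C \<longrightarrow> (\<forall>t. \<exists>t'\<ge>t. act t' = Some r))"

definition gathered_eventually :: "nat \<Rightarrow> (nat \<Rightarrow> state) \<Rightarrow> nat set \<Rightarrow> bool" where
  "gathered_eventually k s C \<longleftrightarrow>
     (\<exists>T g. \<forall>t\<ge>T. \<forall>r<k. r \<notin> C \<longrightarrow> fst (s t) r = g)"

definition gatherable_one_crash :: "nat \<Rightarrow> nat \<Rightarrow> (nat \<Rightarrow> node) \<Rightarrow> bool" where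
  "gatherable_one_crash n k p0 \<longleftrightarrow>
     (\<exists>A. valid_alg n A \<and>
        (\<forall>s act C tc. execution n k A p0 s act \<and> crash_fair k act C tc \<longrightarrow>
            gathered_eventually k s C))"

definition csquare :: "nat \<Rightarrow> nat \<Rightarrow> node set" where
  "csquare n m = {(x, y). m \<le> x \<and> x + m < n \<and> m \<le> y \<and> y + m < n}"

definition mes_margin :: "nat \<Rightarrow> node set \<Rightarrow> nat" where
  "mes_margin n P = (GREATEST m. 2 * m < n \<and> P \<subseteq> csquare n m)"

definition mes_corners :: "nat \<Rightarrow> node set \<Rightarrow> node set" where
  "mes_corners n P = (let m = mes_margin n P; M = n - 1 - m in {(m, m), (m, M), (M, m), (M, M)})"

end

theory Submission
  imports Defs
begin


definition mdist :: "node \<Rightarrow> node \<Rightarrow> nat" where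
  "mdist u v = nat (\<bar>int (fst u) - int (fst v)\<bar> + \<bar>int (snd u) - int (snd v)\<bar>)"

lemma adj_mdist: "adj u v \<longleftrightarrow> mdist u v = 1"
  unfolding adj_def mdist_def by auto

lemma mdist_tri: "mdist u w \<le> mdist u v + mdist v w"
  unfolding mdist_def by auto

lemma mdist_sym: "mdist u v = mdist v u"
  unfolding mdist_def by auto

lemma mdist_0: "mdist u v = 0 \<longleftrightarrow> u = v"
  unfolding mdist_def by (cases u; cases v) auto

lemma mdist_step:
  assumes "u \<in> grid n" "v \<in> grid n" "mdist u v = Suc k"
  shows "\<exists>w\<in>grid n. adj u w \<and> mdist w v = k"
proof -
  obtain a b where u: "u = (a,b)" by (cases u)
  obtain c d where v: "v = (c,d)" by (cases v)
  have g: "a < n" "b < n" "c < n" "d < n" using assms(1,2) u v by (auto simp: grid_def)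
  have m: "nat (\<bar>int a - int c\<bar> + \<bar>int b - int d\<bar>) = Suc k" using assms(3) u v by (simp add: mdist_def)
  show ?thesis
  proof (cases "a < c")
    case True
    show ?thesis by (rule bexI[of _ "(Suc a, b)"]) (use True g m u v in \<open>auto simp: adj_def mdist_def grid_def\<close>)
  next
    case F1: False
    show ?thesis
    proof (cases "c < a")
      case True
      show ?thesis by (rule bexI[of _ "(a - 1, b)"]) (use True g m u v in \<open>auto simp: adj_def mdist_def grid_def\<close>)
    next
      case F2: False
      hence ac: "a = c" using F1 by simp
      show ?thesis
      proof (cases "b < d")
        case True
        show ?thesis by (rule bexI[of _ "(a, Suc b)"]) (use True g m u v ac in \<open>auto simp: adj_def mdist_def grid_def\<close>)
      next
        case False
        hence "d < b" using m ac by auto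
        then show ?thesis by (rule_tac bexI[of _ "(a, b - 1)"]) (use g m u v ac in \<open>auto simp: adj_def mdist_def grid_def\<close>)
      qed
    qed
  qed
qed

lemma aut_le:
  assumes "grid_aut n \<tau>"
  shows "u \<in> grid n \<Longrightarrow> v \<in> grid n \<Longrightarrow> mdist u v = k \<Longrightarrow> mdist (\<tau> u) (\<tau> v) \<le> k"
proof (induction k arbitrary: u)
  case 0
  then show ?case by (simp add: mdist_0)
next
  case (Suc k)
  then obtain w where w: "w \<in> grid n" "adj u w" "mdist w v = k" using mdist_step by blast
  have "adj (\<tau> u) (\<tau> w)" using assms w Suc.prems unfolding grid_aut_def by blast
  hence "mdist (\<tau> u) (\<tau> w) = 1" by (simp add: adj_mdist)
  moreover have "mdist (\<tau> w) (\<tau> v) \<le> k" using Suc.IH w Suc.prems by blast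
  ultimately show ?case using mdist_tri[of "\<tau> u" "\<tau> v" "\<tau> w"] by simp
qed

lemma aut_inv:
  assumes "grid_aut n \<tau>"
  shows "grid_aut n (inv_into (grid n) \<tau>)"
proof -
  have b: "bij_betw \<tau> (grid n) (grid n)" using assms grid_aut_def by blast
  have bi: "bij_betw (inv_into (grid n) \<tau>) (grid n) (grid n)" using bij_betw_inv_into[OF b] .
  have "\<forall>u\<in>grid n. \<forall>v\<in>grid n. adj (inv_into (grid n) \<tau> u) (inv_into (grid n) \<tau> v) \<longleftrightarrow> adj u v"
  proof (intro ballI)
    fix u v assume uv: "u \<in> grid n" "v \<in> grid n"
    let ?x = "inv_into (grid n) \<tau> u" and ?y = "inv_into (grid n) \<tau> v"
    have xy: "?x \<in> grid n" "?y \<in> grid n" using bi uv bij_betwE by blast+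
    have "\<tau> ?x = u" "\<tau> ?y = v" using b uv by (simp_all add: bij_betw_inv_into_right)
    then show "adj ?x ?y \<longleftrightarrow> adj u v" using assms xy unfolding grid_aut_def by metis
  qed
  then show ?thesis using bi unfolding grid_aut_def by blast
qed

lemma aut_mdist:
  assumes "grid_aut n \<tau>" "u \<in> grid n" "v \<in> grid n"
  shows "mdist (\<tau> u) (\<tau> v) = mdist u v"
proof -
  have b: "bij_betw \<tau> (grid n) (grid n)" using assms grid_aut_def by blast
  have tu: "\<tau> u \<in> grid n" "\<tau> v \<in> grid n" using b assms bij_betwE by blast+
  have 1: "mdist (\<tau> u) (\<tau> v) \<le> mdist u v" using aut_le[OF assms(1)] assms by blast
  have "mdist (inv_into (grid n) \<tau> (\<tau> u)) (inv_into (grid n) \<tau> (\<tau> v)) \<le> mdist (\<tau> u) (\<tau> v)"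
    using aut_le[OF aut_inv[OF assms(1)]] tu by blast
  moreover have "inv_into (grid n) \<tau> (\<tau> u) = u" "inv_into (grid n) \<tau> (\<tau> v) = v"
    using b assms by (simp_all add: bij_betw_inv_into_left)
  ultimately show ?thesis using 1 by simp
qed

definition K0 :: "nat \<Rightarrow> node set" where
  "K0 n = {(0,0),(0,n-1),(n-1,0),(n-1,n-1)}"

lemma K0_char:
  assumes "v \<in> grid n"
  shows "v \<in> K0 n \<longleftrightarrow> (\<exists>u\<in>grid n. mdist u v = 2*(n-1))"
proof -
  obtain a b where v: "v = (a,b)" by (cases v)
  have g: "a < n" "b < n" using assms v by (auto simp: grid_def)
  show ?thesis
  proof
    assume "v \<in> K0 n"
    then show "\<exists>u\<in>grid n. mdist u v = 2*(n-1)"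
      using g v by (rule_tac bexI[of _ "(n-1-a, n-1-b)"]) (auto simp: K0_def mdist_def grid_def)
  next
    assume "\<exists>u\<in>grid n. mdist u v = 2*(n-1)"
    then obtain c d where "c < n" "d < n" "nat (\<bar>int c - int a\<bar> + \<bar>int d - int b\<bar>) = 2*(n-1)"
      using v by (auto simp: grid_def mdist_def)
    then have "(a = 0 \<or> a = n-1) \<and> (b = 0 \<or> b = n - 1)" using g by linarith
    then show "v \<in> K0 n" using v by (auto simp: K0_def)
  qed
qed

lemma K0_grid: "n > 0 \<Longrightarrow> K0 n \<subseteq> grid n"
  by (auto simp: K0_def grid_def)

lemma aut_K0:
  assumes "grid_aut n \<tau>" "v \<in> K0 n" "n > 0"
  shows "\<tau> v \<in> K0 n"
proof -
  have b: "bij_betw \<tau> (grid n) (grid n)" using assms grid_aut_def by blast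
  have vg: "v \<in> grid n" using assms K0_grid by blast
  then obtain u where u: "u \<in> grid n" "mdist u v = 2*(n-1)" using K0_char assms by blast
  have "\<tau> u \<in> grid n" "\<tau> v \<in> grid n" using b u vg bij_betwE by blast+
  moreover have "mdist (\<tau> u) (\<tau> v) = 2*(n-1)" using aut_mdist assms u vg by simp
  ultimately show ?thesis using K0_char by blast
qed

definition fc :: "nat \<Rightarrow> node \<Rightarrow> nat" where
  "fc n v = min (fst v) (n - 1 - fst v) + min (snd v) (n - 1 - snd v)"

lemma fc_le: "v \<in> grid n \<Longrightarrow> k \<in> K0 n \<Longrightarrow> fc n v \<le> mdist v k"
  by (cases v) (auto simp: fc_def K0_def mdist_def grid_def)

lemma fc_ex: "v \<in> grid n \<Longrightarrow> \<exists>k\<in>K0 n. fc n v = mdist v k"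
proof -
  assume a: "v \<in> grid n"
  obtain x y where v: "v = (x,y)" by (cases v)
  have g: "x < n" "y < n" using a v by (auto simp: grid_def)
  show ?thesis
    apply (rule bexI[of _ "(if x \<le> n-1-x then 0 else n-1, if y \<le> n-1-y then 0 else n-1)"])
    using g v by (auto simp: fc_def K0_def mdist_def)
qed

lemma aut_fc_le:
  assumes "grid_aut n \<tau>" "v \<in> grid n"
  shows "fc n (\<tau> v) \<le> fc n v"
proof -
  have b: "bij_betw \<tau> (grid n) (grid n)" using assms grid_aut_def by blast
  have n: "n > 0" using assms(2) by (auto simp: grid_def)
  obtain k where k: "k \<in> K0 n" "fc n v = mdist v k" using fc_ex assms by blast
  have kg: "k \<in> grid n" using K0_grid n k by blast
  have "fc n (\<tau> v) \<le> mdist (\<tau> v) (\<tau> k)" using fc_le aut_K0 assms k n b bij_betwE by blast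
  also have "\<dots> = fc n v" using aut_mdist assms kg k by simp
  finally show ?thesis .
qed

lemma aut_fc:
  assumes "grid_aut n \<tau>" "v \<in> grid n"
  shows "fc n (\<tau> v) = fc n v"
proof -
  have b: "bij_betw \<tau> (grid n) (grid n)" using assms grid_aut_def by blast
  have tv: "\<tau> v \<in> grid n" using b assms bij_betwE by blast
  have "fc n (inv_into (grid n) \<tau> (\<tau> v)) \<le> fc n (\<tau> v)" using aut_fc_le[OF aut_inv[OF assms(1)] tv] .
  moreover have "inv_into (grid n) \<tau> (\<tau> v) = v" using b assms by (simp add: bij_betw_inv_into_left)
  ultimately show ?thesis using aut_fc_le[OF assms] by simp
qed




definition iscent :: "nat \<Rightarrow> config \<Rightarrow> node \<Rightarrow> bool" where
  "iscent n cfg v \<longleftrightarrow> v \<in> grid n \<and> cfg v \<noteq> 0 \<and>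
     (\<forall>u\<in>grid n. cfg u \<noteq> 0 \<and> u \<noteq> v \<longrightarrow> fc n v < fc n u)"

definition good :: "nat \<Rightarrow> config \<Rightarrow> node \<Rightarrow> node \<Rightarrow> bool" where
  "good n cfg v w \<longleftrightarrow> w \<in> grid n \<and> adj v w \<and>
     (\<exists>c. iscent n cfg c \<and> mdist w c < mdist v c \<and> (w = c \<or> fc n c < fc n w))"

definition alg :: "nat \<Rightarrow> algorithm" where
  "alg n cfg v = (if \<exists>w. good n cfg v w then SOME w. good n cfg v w else v)"

lemma valid: "valid_alg n (alg n)"
  unfolding valid_alg_def
proof (intro allI impI)
  fix cfg v assume v: "v \<in> grid n"
  show "alg n cfg v \<in> grid n \<and> (alg n cfg v = v \<or> adj v (alg n cfg v))"
  proof (cases "\<exists>w. good n cfg v w")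
    case True
    have "good n cfg v (SOME w. good n cfg v w)" using someI_ex[OF True] .
    then have "good n cfg v (alg n cfg v)" using True by (simp add: alg_def)
    then show ?thesis unfolding good_def by blast
  next
    case False
    then show ?thesis using v by (simp add: alg_def)
  qed
qed

lemma iscent_uniq: "iscent n cfg c \<Longrightarrow> iscent n cfg c' \<Longrightarrow> c = c'"
proof (rule ccontr)
  assume a: "iscent n cfg c" "iscent n cfg c'" "c \<noteq> c'"
  then have "fc n c < fc n c'" unfolding iscent_def by blast
  moreover have "fc n c' < fc n c" using a unfolding iscent_def by metis
  ultimately show False by simp
qed

lemma aut_bij: "grid_aut n \<tau> \<Longrightarrow> bij_betw \<tau> (grid n) (grid n)"
  unfolding grid_aut_def by blast

lemma aut_in: "grid_aut n \<tau> \<Longrightarrow> x \<in> grid n \<Longrightarrow> \<tau> x \<in> grid n"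
  using aut_bij bij_betwE by blast

lemma aut_adj: "grid_aut n \<tau> \<Longrightarrow> x \<in> grid n \<Longrightarrow> y \<in> grid n \<Longrightarrow> adj (\<tau> x) (\<tau> y) \<longleftrightarrow> adj x y"
  unfolding grid_aut_def by blast

lemma aut_inj: "grid_aut n \<tau> \<Longrightarrow> x \<in> grid n \<Longrightarrow> y \<in> grid n \<Longrightarrow> \<tau> x = \<tau> y \<longleftrightarrow> x = y"
  using aut_bij bij_betw_imp_inj_on inj_on_eq_iff by metis

lemma aut_surj: "grid_aut n \<tau> \<Longrightarrow> u \<in> grid n \<Longrightarrow> \<exists>x\<in>grid n. u = \<tau> x"
  using aut_bij bij_betw_imp_surj_on by blast

lemma iscent_view:
  assumes "grid_aut n \<tau>" "x \<in> grid n"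
  shows "iscent n (view n \<tau> cfg) x \<longleftrightarrow> iscent n cfg (\<tau> x)"
proof -
  have "(\<forall>u\<in>grid n. view n \<tau> cfg u \<noteq> 0 \<and> u \<noteq> x \<longrightarrow> fc n x < fc n u) \<longleftrightarrow>
        (\<forall>u\<in>grid n. cfg u \<noteq> 0 \<and> u \<noteq> \<tau> x \<longrightarrow> fc n (\<tau> x) < fc n u)"
  proof
    assume H: "\<forall>u\<in>grid n. view n \<tau> cfg u \<noteq> 0 \<and> u \<noteq> x \<longrightarrow> fc n x < fc n u"
    show "\<forall>u\<in>grid n. cfg u \<noteq> 0 \<and> u \<noteq> \<tau> x \<longrightarrow> fc n (\<tau> x) < fc n u"
    proof (intro ballI impI)
      fix u assume u: "u \<in> grid n" "cfg u \<noteq> 0 \<and> u \<noteq> \<tau> x"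
      obtain y where y: "y \<in> grid n" "u = \<tau> y" using aut_surj assms u by blast
      then have "fc n x < fc n y" using H u by (auto simp: view_def)
      then show "fc n (\<tau> x) < fc n u" using aut_fc assms y by simp
    qed
  next
    assume H: "\<forall>u\<in>grid n. cfg u \<noteq> 0 \<and> u \<noteq> \<tau> x \<longrightarrow> fc n (\<tau> x) < fc n u"
    show "\<forall>u\<in>grid n. view n \<tau> cfg u \<noteq> 0 \<and> u \<noteq> x \<longrightarrow> fc n x < fc n u"
    proof (intro ballI impI)
      fix u assume u: "u \<in> grid n" "view n \<tau> cfg u \<noteq> 0 \<and> u \<noteq> x"
      have "\<tau> u \<in> grid n" "cfg (\<tau> u) \<noteq> 0" "\<tau> u \<noteq> \<tau> x"
        using u assms aut_in aut_inj by (auto simp: view_def)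
      then have "fc n (\<tau> x) < fc n (\<tau> u)" using H by blast
      then show "fc n x < fc n u" using aut_fc assms u by simp
    qed
  qed
  then show ?thesis using assms aut_in by (auto simp: iscent_def view_def)
qed

lemma good_view:
  assumes "grid_aut n \<tau>" "x \<in> grid n" "w \<in> grid n"
  shows "good n (view n \<tau> cfg) x w \<longleftrightarrow> good n cfg (\<tau> x) (\<tau> w)"
proof
  assume "good n (view n \<tau> cfg) x w"
  then obtain c where c: "iscent n (view n \<tau> cfg) c" "mdist w c < mdist x c" "w = c \<or> fc n c < fc n w"
    and a: "adj x w" unfolding good_def by blast
  have cg: "c \<in> grid n" using c iscent_def by blast
  have 1: "iscent n cfg (\<tau> c)" using iscent_view[OF assms(1) cg] c(1) by simp
  have 2: "mdist (\<tau> w) (\<tau> c) < mdist (\<tau> x) (\<tau> c)" using c(2) aut_mdist[OF assms(1)] assms cg by simp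
  have 3: "\<tau> w = \<tau> c \<or> fc n (\<tau> c) < fc n (\<tau> w)" using c(3) aut_fc[OF assms(1)] assms cg by auto
  have 4: "adj (\<tau> x) (\<tau> w)" using a aut_adj[OF assms(1)] assms by simp
  show "good n cfg (\<tau> x) (\<tau> w)" unfolding good_def
    using 1 2 3 4 aut_in[OF assms(1) assms(3)] by blast
next
  assume "good n cfg (\<tau> x) (\<tau> w)"
  then obtain c' where c: "iscent n cfg c'" "mdist (\<tau> w) c' < mdist (\<tau> x) c'" "\<tau> w = c' \<or> fc n c' < fc n (\<tau> w)"
    and a: "adj (\<tau> x) (\<tau> w)" unfolding good_def by blast
  have "c' \<in> grid n" using c iscent_def by blast
  then obtain c where cg: "c \<in> grid n" "c' = \<tau> c" using aut_surj assms by blast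
  have 1: "iscent n (view n \<tau> cfg) c" using iscent_view[OF assms(1) cg(1)] c(1) cg by simp
  have 2: "mdist w c < mdist x c" using c(2) aut_mdist[OF assms(1)] assms cg by simp
  have 3: "w = c \<or> fc n c < fc n w" using c(3) aut_fc[OF assms(1)] aut_inj[OF assms(1)] assms cg by auto
  have 4: "adj x w" using a aut_adj[OF assms(1)] assms by simp
  show "good n (view n \<tau> cfg) x w" unfolding good_def
    using 1 2 3 4 assms(3) by blast
qed

lemma target_prop:
  assumes "grid_aut n \<tau>" "v \<in> grid n"
  shows "(target n (alg n) \<tau> cfg v = v \<and> \<not>(\<exists>w. good n cfg v w)) \<or> good n cfg v (target n (alg n) \<tau> cfg v)"
proof -
  let ?x = "inv_into (grid n) \<tau> v"
  have x: "?x \<in> grid n" "\<tau> ?x = v"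
    using aut_bij[OF assms(1)] assms(2) by (simp_all add: inv_into_into bij_betw_imp_surj_on bij_betw_inv_into_right)
  show ?thesis
  proof (cases "\<exists>w. good n (view n \<tau> cfg) ?x w")
    case True
    have "good n (view n \<tau> cfg) ?x (SOME w. good n (view n \<tau> cfg) ?x w)" using someI_ex[OF True] .
    then have g: "good n (view n \<tau> cfg) ?x (alg n (view n \<tau> cfg) ?x)" using True by (simp add: alg_def)
    then have "alg n (view n \<tau> cfg) ?x \<in> grid n" unfolding good_def by blast
    then have "good n cfg v (target n (alg n) \<tau> cfg v)"
      using good_view[OF assms(1) x(1)] g x unfolding target_def by simp
    then show ?thesis by blast
  next
    case False
    have "\<not>(\<exists>w. good n cfg v w)"
    proof
      assume "\<exists>w. good n cfg v w"
      then obtain w where w: "good n cfg v w" by blast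
      then have "w \<in> grid n" unfolding good_def by blast
      then obtain y where y: "y \<in> grid n" "w = \<tau> y" using aut_surj assms by blast
      then have "good n (view n \<tau> cfg) ?x y" using good_view[OF assms(1) x(1) y(1)] w x by simp
      then show False using False by blast
    qed
    then show ?thesis using False x unfolding target_def alg_def by simp
  qed
qed



definition corners :: "nat \<Rightarrow> nat \<Rightarrow> node set" where
  "corners n m = {(m,m),(m,n-1-m),(n-1-m,m),(n-1-m,n-1-m)}"

lemma csq_grid: "csquare n m \<subseteq> grid n"
  by (auto simp: csquare_def grid_def)

lemma corner_box: "2*m < n \<Longrightarrow> c \<in> corners n m \<Longrightarrow> c \<in> csquare n m"
  by (auto simp: corners_def csquare_def)

lemma corner_fc: "2*m < n \<Longrightarrow> c \<in> corners n m \<Longrightarrow> fc n c = 2*m"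
  by (auto simp: corners_def fc_def)

lemma box_fc: "p \<in> csquare n m \<Longrightarrow> p \<notin> corners n m \<Longrightarrow> 2*m < fc n p"
  by (cases p) (auto simp: corners_def csquare_def fc_def)

lemma box_step:
  assumes "v \<in> csquare n m" "c \<in> csquare n m" "adj v w" "mdist w c < mdist v c"
  shows "w \<in> csquare n m"
  using assms by (cases v; cases w; cases c) (auto simp: csquare_def adj_def mdist_def)

lemma box_exists0:
  assumes m2: "2*m < n" and v: "v \<in> csquare n m" and c: "c \<in> corners n m" and vc: "v \<noteq> c"
    and nc: "v \<notin> corners n m"
  shows "\<exists>w. adj v w \<and> mdist w c < mdist v c \<and> (w = c \<or> w \<notin> corners n m)"
proof -
  obtain x y where vxy: "v = (x,y)" by (cases v)
  obtain cx cy where cxy: "c = (cx,cy)" by (cases c)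
  define M where "M = n - 1 - m"
  have cx: "cx = m \<or> cx = M" and cy: "cy = m \<or> cy = M" using c cxy by (auto simp: corners_def M_def)
  have b: "m \<le> x" "x \<le> M" "m \<le> y" "y \<le> M" "m \<le> M" using v vxy m2 by (auto simp: csquare_def M_def)
  have cor: "\<And>a b. (a,b) \<in> corners n m \<longleftrightarrow> (a = m \<or> a = M) \<and> (b = m \<or> b = M)"
    by (auto simp: corners_def M_def)
  define sx where "sx = (if x < cx then x + 1 else x - 1)"
  define sy where "sy = (if y < cy then y + 1 else y - 1)"
  have ad1: "x \<noteq> cx \<Longrightarrow> adj v (sx, y) \<and> mdist (sx,y) c < mdist v c"
    using cx b unfolding sx_def vxy cxy adj_def mdist_def by auto
  have ad2: "y \<noteq> cy \<Longrightarrow> adj v (x, sy) \<and> mdist (x,sy) c < mdist v c"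
    using cy b unfolding sy_def vxy cxy adj_def mdist_def by auto
  have nc': "\<not> ((x = m \<or> x = M) \<and> (y = m \<or> y = M))" using nc cor vxy by simp
  show ?thesis
  proof (cases "x \<noteq> cx \<and> ((sx = cx \<and> y = cy) \<or> \<not> ((sx = m \<or> sx = M) \<and> (y = m \<or> y = M)))")
    case True
    then show ?thesis using ad1 cor cxy by (intro exI[of _ "(sx,y)"]) auto
  next
    case False
    have yc: "y \<noteq> cy" using False nc' cx cy b vc vxy cxy unfolding sx_def by auto
    have "(sy = cy \<and> x = cx) \<or> \<not> ((x = m \<or> x = M) \<and> (sy = m \<or> sy = M))"
      using False yc nc' cx cy b unfolding sx_def sy_def by auto
    then show ?thesis using ad2[OF yc] cor cxy by (intro exI[of _ "(x,sy)"]) auto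
  qed
qed

lemma box_exists:
  assumes m2: "2*m < n" and v: "v \<in> csquare n m" and c: "c \<in> corners n m" and vc: "v \<noteq> c"
    and f: "2*m < fc n v"
  shows "\<exists>w\<in>grid n. adj v w \<and> mdist w c < mdist v c \<and> (w = c \<or> 2*m < fc n w)"
proof -
  have "v \<notin> corners n m" using f corner_fc m2 by fastforce
  then obtain w where w: "adj v w" "mdist w c < mdist v c" "w = c \<or> w \<notin> corners n m"
    using box_exists0 assms by blast
  have wb: "w \<in> csquare n m" using box_step[OF v corner_box[OF m2 c] w(1,2)] .
  then have "w = c \<or> 2*m < fc n w" using w(3) box_fc by blast
  then show ?thesis using wb csq_grid w by blast
qed

lemma mes_ok:
  assumes "P \<subseteq> grid n" "n > 0"
  shows "2 * mes_margin n P < n \<and> P \<subseteq> csquare n (mes_margin n P)"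
proof -
  have "grid n = csquare n 0" by (auto simp: grid_def csquare_def)
  then have "2*0 < n \<and> P \<subseteq> csquare n 0" using assms by simp
  then show ?thesis unfolding mes_margin_def
    by (rule GreatestI_nat[where b = n]) auto
qed

lemma mes_corners_eq: "mes_corners n P = corners n (mes_margin n P)"
  by (simp add: mes_corners_def corners_def Let_def)



context
  fixes n k :: nat and m :: nat and c0 :: node and r0 :: nat
  assumes m2: "2*m < n" and c0c: "c0 \<in> corners n m" and r0k: "r0 < k"
begin

definition invs :: "state \<Rightarrow> bool" where
  "invs st \<longleftrightarrow> fst st r0 = c0 \<and>
     (\<forall>r<k. fst st r \<in> csquare n m \<and> (fst st r = c0 \<or> 2*m < fc n (fst st r))) \<and>
     (\<forall>r<k. \<forall>w. snd st r = Some w \<longrightarrow> w \<in> csquare n m \<and> (w = c0 \<or> 2*m < fc n w) \<and>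
        (w = fst st r \<longrightarrow> w = c0) \<and> (w \<noteq> fst st r \<longrightarrow> mdist w c0 < mdist (fst st r) c0))"

lemma c0_box: "c0 \<in> csquare n m" using corner_box[OF m2 c0c] .
lemma c0_grid: "c0 \<in> grid n" using c0_box csq_grid by blast
lemma c0_fc: "fc n c0 = 2*m" using corner_fc[OF m2 c0c] .

lemma cent:
  assumes "invs st"
  shows "iscent n (config_of n k (fst st)) c0"
proof -
  have fin: "finite {r. r < k \<and> fst st r = u}" for u by simp
  have "r0 \<in> {r. r < k \<and> fst st r = c0}" using assms r0k unfolding invs_def by auto
  then have "card {r. r < k \<and> fst st r = c0} \<noteq> 0" using fin[of c0] by (metis card_0_eq empty_iff)
  moreover have "config_of n k (fst st) c0 = min 2 (card {r. r < k \<and> fst st r = c0})"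
    using c0_grid by (simp add: config_of_def)
  ultimately have 1: "config_of n k (fst st) c0 \<noteq> 0" by linarith
  have 2: "fc n c0 < fc n u" if u: "u \<in> grid n" "config_of n k (fst st) u \<noteq> 0" "u \<noteq> c0" for u
  proof -
    have "config_of n k (fst st) u = min 2 (card {r. r < k \<and> fst st r = u})"
      using u by (simp add: config_of_def)
    then have "card {r. r < k \<and> fst st r = u} \<noteq> 0" using u(2) by linarith
    then obtain r where "r < k" "fst st r = u" by (metis (mono_tags, lifting) Collect_empty_eq card.empty)
    then show ?thesis using assms u(3) c0_fc unfolding invs_def by auto
  qed
  show ?thesis unfolding iscent_def using 1 2 c0_grid by blast
qed

lemma look:
  assumes I: "invs st" and r: "r < k" and t: "grid_aut n \<tau>"
  defines "w \<equiv> target n (alg n) \<tau> (config_of n k (fst st)) (fst st r)"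
  shows "(fst st r = c0 \<longrightarrow> w = c0) \<and>
         (fst st r \<noteq> c0 \<longrightarrow> w \<noteq> fst st r \<and> w \<in> csquare n m \<and> mdist w c0 < mdist (fst st r) c0 \<and>
             (w = c0 \<or> 2*m < fc n w))"
proof -
  let ?cfg = "config_of n k (fst st)"
  let ?v = "fst st r"
  have vb: "?v \<in> csquare n m" and vf: "?v = c0 \<or> 2*m < fc n ?v" using I r unfolding invs_def by auto
  have vg: "?v \<in> grid n" using vb csq_grid by blast
  have ce: "iscent n ?cfg c0" using cent[OF I] .
  have gd: "good n ?cfg ?v u \<Longrightarrow> adj ?v u \<and> mdist u c0 < mdist ?v c0 \<and> (u = c0 \<or> 2*m < fc n u)" for u
    using iscent_uniq[OF ce] c0_fc unfolding good_def by metis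
  have tp: "(w = ?v \<and> \<not>(\<exists>u. good n ?cfg ?v u)) \<or> good n ?cfg ?v w"
    using target_prop[OF t vg] unfolding w_def by blast
  show ?thesis
  proof (cases "?v = c0")
    case True
    have z: "mdist c0 c0 = 0" by (simp add: mdist_0)
    have "\<not> good n ?cfg ?v u" for u using gd[of u] True z by auto
    then show ?thesis using tp True by blast
  next
    case False
    then have f: "2*m < fc n ?v" using vf by blast
    obtain u where u: "u \<in> grid n" "adj ?v u" "mdist u c0 < mdist ?v c0" "u = c0 \<or> 2*m < fc n u"
      using box_exists[OF m2 vb c0c False f] by blast
    then have "good n ?cfg ?v u" unfolding good_def
      by (intro conjI exI[of _ c0]) (use ce c0_fc u in auto)
    then have gw: "good n ?cfg ?v w" using tp by blast
    then have w1: "adj ?v w" "mdist w c0 < mdist ?v c0" "w = c0 \<or> 2*m < fc n w" using gd by auto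
    have "w \<in> csquare n m" using box_step[OF vb c0_box w1(1,2)] .
    moreover have "w \<noteq> ?v" using w1(1) by (auto simp: adj_mdist mdist_def)
    ultimately show ?thesis using w1 False by blast
  qed
qed

lemma step_inv:
  assumes I: "invs st" and r: "r < k" and st: "robot_step n k (alg n) r st st'"
  shows "invs st'"
proof (cases "snd st r")
  case None
  then obtain \<tau> where t: "grid_aut n \<tau>" and st': "st' = (fst st, (snd st)(r := Some (target n (alg n) \<tau> (config_of n k (fst st)) (fst st r))))"
    using st unfolding robot_step_def by auto
  note L = look[OF I r t]
  show ?thesis using I L r c0_box unfolding invs_def st' by auto
next
  case (Some w)
  then have st': "st' = ((fst st)(r := w), (snd st)(r := None))" using st unfolding robot_step_def by auto
  have w: "w \<in> csquare n m" "w = c0 \<or> 2*m < fc n w" "w = fst st r \<longrightarrow> w = c0"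
    "w \<noteq> fst st r \<longrightarrow> mdist w c0 < mdist (fst st r) c0" using I r Some unfolding invs_def by blast+
  have z: "mdist c0 c0 = 0" by (simp add: mdist_0)
  have r0s: "r = r0 \<Longrightarrow> w = c0" using w I z unfolding invs_def by auto
  show ?thesis using I w r r0s unfolding invs_def st' by auto
qed

definition phi :: "nat \<Rightarrow> state \<Rightarrow> nat" where
  "phi r st = (if fst st r = c0 then 0 else 2 * mdist (fst st r) c0 + (if snd st r = None then 1 else 0))"

lemma step_other:
  assumes "robot_step n k A r' st st'" "r' \<noteq> r"
  shows "fst st' r = fst st r \<and> snd st' r = snd st r"
  using assms unfolding robot_step_def by (auto split: option.splits)

lemma step_self:
  assumes I: "invs st" and r: "r < k" and st: "robot_step n k (alg n) r st st'"
  shows "phi r st' \<le> phi r st \<and> (0 < phi r st \<longrightarrow> phi r st' < phi r st)"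
proof (cases "snd st r")
  case None
  then obtain \<tau> where t: "grid_aut n \<tau>" and st': "st' = (fst st, (snd st)(r := Some (target n (alg n) \<tau> (config_of n k (fst st)) (fst st r))))"
    using st unfolding robot_step_def by auto
  show ?thesis using None unfolding st' phi_def by auto
next
  case (Some w)
  then have st': "st' = ((fst st)(r := w), (snd st)(r := None))" using st unfolding robot_step_def by auto
  have w: "w = fst st r \<longrightarrow> w = c0"
    "w \<noteq> fst st r \<longrightarrow> mdist w c0 < mdist (fst st r) c0" using I r Some unfolding invs_def by blast+
  have z: "mdist c0 c0 = 0" by (simp add: mdist_0)
  show ?thesis
  proof (cases "fst st r = c0")
    case True
    then have "w = c0" using w z by auto
    then show ?thesis using True unfolding st' phi_def by auto
  next
    case False
    then have "w \<noteq> fst st r" using w by auto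
    then have "mdist w c0 < mdist (fst st r) c0" using w by auto
    then show ?thesis using False Some unfolding st' phi_def by auto
  qed
qed

context
  fixes p0 :: "nat \<Rightarrow> node" and s :: "nat \<Rightarrow> state" and act :: "nat \<Rightarrow> nat option"
  assumes init: "invs (p0, \<lambda>_. None)" and ex: "execution n k (alg n) p0 s act"
begin

lemma exec_inv: "invs (s t)"
proof (induction t)
  case 0
  then show ?case using init ex unfolding execution_def by simp
next
  case (Suc t)
  have "case act t of None \<Rightarrow> s (Suc t) = s t | Some r \<Rightarrow> r < k \<and> robot_step n k (alg n) r (s t) (s (Suc t))"
    using ex unfolding execution_def by blast
  then show ?case
  proof (cases "act t")
    case None
    then show ?thesis using \<open>case act t of None \<Rightarrow> _ | Some r \<Rightarrow> _\<close> Suc.IH by simp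
  next
    case (Some r)
    then have "r < k" "robot_step n k (alg n) r (s t) (s (Suc t))"
      using \<open>case act t of None \<Rightarrow> _ | Some r \<Rightarrow> _\<close> by auto
    then show ?thesis using step_inv[OF Suc.IH] by blast
  qed
qed

lemma exec_phi:
  assumes r: "r < k"
  shows "phi r (s (Suc t)) \<le> phi r (s t) \<and> (act t = Some r \<and> 0 < phi r (s t) \<longrightarrow> phi r (s (Suc t)) < phi r (s t))"
proof -
  have E: "case act t of None \<Rightarrow> s (Suc t) = s t | Some r \<Rightarrow> r < k \<and> robot_step n k (alg n) r (s t) (s (Suc t))"
    using ex unfolding execution_def by blast
  show ?thesis
  proof (cases "act t")
    case None
    then show ?thesis using E by simp
  next
    case (Some r')
    then have st: "r' < k" "robot_step n k (alg n) r' (s t) (s (Suc t))" using E by auto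
    show ?thesis
    proof (cases "r' = r")
      case True
      then show ?thesis using step_self[OF exec_inv r] st by auto
    next
      case False
      then have "fst (s (Suc t)) r = fst (s t) r \<and> snd (s (Suc t)) r = snd (s t) r"
        using step_other st by blast
      then show ?thesis using False Some unfolding phi_def by simp
    qed
  qed
qed

lemma phi_mono:
  assumes r: "r < k" and tt: "t \<le> t'"
  shows "phi r (s t') \<le> phi r (s t)"
  using tt
proof (induction t' rule: dec_induct)
  case base then show ?case by simp
next
  case (step t')
  then show ?case using exec_phi[OF r, of t'] by linarith
qed

lemma phi_zero:
  assumes r: "r < k" and fair: "\<forall>t. \<exists>t'\<ge>t. act t' = Some r"
  shows "\<exists>T. \<forall>t\<ge>T. fst (s t) r = c0"
proof -
  have "\<forall>t. phi r (s t) = v \<longrightarrow> (\<exists>T. phi r (s T) = 0)" for v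
  proof (induction v rule: less_induct)
    case (less v)
    show ?case
    proof (intro allI impI)
      fix t assume tv: "phi r (s t) = v"
      show "\<exists>T. phi r (s T) = 0"
      proof (cases "v = 0")
        case True then show ?thesis using tv by blast
      next
        case False
        obtain t' where t': "t' \<ge> t" "act t' = Some r" using fair by blast
        have "phi r (s t') \<le> v" using phi_mono[OF r t'(1)] tv by simp
        show ?thesis
        proof (cases "phi r (s t') = 0")
          case True then show ?thesis by blast
        next
          case False
          then have "phi r (s (Suc t')) < v" using exec_phi[OF r, of t'] t'(2) \<open>phi r (s t') \<le> v\<close> by auto
          then show ?thesis using less by blast
        qed
      qed
    qed
  qed
  then obtain T where T: "phi r (s T) = 0" by blast
  have "fst (s t) r = c0" if "t \<ge> T" for t
  proof -
    have "phi r (s t) = 0" using phi_mono[OF r that] T by simp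
    then show ?thesis unfolding phi_def by (auto simp: mdist_0 split: if_splits)
  qed
  then show ?thesis by blast
qed

lemma all_zero:
  assumes fair: "\<forall>r<k. r \<notin> C \<longrightarrow> (\<forall>t. \<exists>t'\<ge>t. act t' = Some r)"
  shows "K \<le> k \<Longrightarrow> \<exists>T. \<forall>t\<ge>T. \<forall>r<K. r \<notin> C \<longrightarrow> fst (s t) r = c0"
proof (induction K)
  case 0 then show ?case by simp
next
  case (Suc K)
  then obtain T1 where T1: "\<forall>t\<ge>T1. \<forall>r<K. r \<notin> C \<longrightarrow> fst (s t) r = c0" by auto
  show ?case
  proof (cases "K \<in> C")
    case True
    then show ?thesis using T1 less_Suc_eq by auto
  next
    case False
    then obtain T2 where T2: "\<forall>t\<ge>T2. fst (s t) K = c0" using phi_zero[of K] fair Suc.prems by auto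
    show ?thesis
      by (rule exI[of _ "max T1 T2"]) (use T1 T2 less_Suc_eq in auto)
  qed
qed

end

end



theorem theorem4:
  fixes n k :: nat and p0 :: "nat \<Rightarrow> node"
  assumes "even n"
    and "k \<ge> 3"
    and "\<forall>r<k. p0 r \<in> grid n"
    and "inj_on p0 {..<k}"
    and "card (mes_corners n (p0 ` {..<k}) \<inter> p0 ` {..<k}) = 1"
  shows "gatherable_one_crash n k p0"
proof -
  let ?P = "p0 ` {..<k}"
  define m where "m = mes_margin n ?P"
  have Pg: "?P \<subseteq> grid n" using assms(3) by auto
  have "p0 0 \<in> grid n" using assms(2,3) by auto
  then have n0: "n > 0" by (auto simp: grid_def)
  have mo: "2*m < n" "?P \<subseteq> csquare n m" using mes_ok[OF Pg n0] unfolding m_def by auto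
  have "card (corners n m \<inter> ?P) = 1" using assms(5) mes_corners_eq m_def by simp
  then obtain c0 where c0: "corners n m \<inter> ?P = {c0}" using card_1_singletonE by blast
  then have "c0 \<in> ?P" by blast
  then obtain r0 where r0: "r0 < k" "p0 r0 = c0" by blast
  have c0c: "c0 \<in> corners n m" using c0 by auto
  have init: "invs n k m c0 r0 (p0, \<lambda>_. None)"
  proof -
    have "p0 r \<in> csquare n m \<and> (p0 r = c0 \<or> 2*m < fc n (p0 r))" if r: "r < k" for r
    proof -
      have b: "p0 r \<in> csquare n m" using mo r by auto
      have "p0 r = c0 \<or> p0 r \<notin> corners n m" using c0 r by auto
      then show ?thesis using b box_fc by blast
    qed
    then show ?thesis unfolding invs_def[OF mo(1) c0c r0(1)] using r0 by simp
  qed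
  show ?thesis unfolding gatherable_one_crash_def
  proof (intro exI[of _ "alg n"] conjI allI impI)
    show "valid_alg n (alg n)" by (rule valid)
  next
    fix s act C tc
    assume H: "execution n k (alg n) p0 s act \<and> crash_fair k act C tc"
    then have fair: "\<forall>r<k. r \<notin> C \<longrightarrow> (\<forall>t. \<exists>t'\<ge>t. act t' = Some r)"
      unfolding crash_fair_def by blast
    obtain T where "\<forall>t\<ge>T. \<forall>r<k. r \<notin> C \<longrightarrow> fst (s t) r = c0"
      using all_zero[OF mo(1) c0c r0(1) init, of s act C k] H fair by blast
    then show "gathered_eventually k s C" unfolding gathered_eventually_def by blast
  qed
qed

end
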